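(* Let $\kappa_*>0$ and $L>0$, and let $H^*$ be a probability measure on $[L,\infty)$. Suppose $X_1,\dots,X_n$ are generated by the hierarchical model $X_i\mid\theta_i\overset{ind}{\sim}\mathrm{Poi}(\theta_i)$, $\theta_i\mid\lambda_i\overset{ind}{\sim}\mathrm{Gamma}(\kappa_*,\lambda_i)$ (shape $\kappa_*$, rate $\lambda_i$), $\lambda_i\overset{iid}{\sim}H^*$. Let $\widehat H_n$ be any maximizer $$\widehat H_n\in\arg\max_{H\in\mathcal P((0,\infty])}\sum_{i=1}^n\log f_H(X_i).$$ Then $$\mathbb E_{H^*}\big[\mathfrak H^2(f_{\widehat H_n},f_{H^*})\big]\le C\,\frac{\log n}{n},$$ where $C>0$ is a constant depending only on $(\kappa_*,L)$.
   Context: For $H$ a probability measure on $(0,\infty]$ and $x\in\{0,1,2,\dots\}$, $f_H(x)=\int r_{\kappa_*,\lambda}(x)\,dH(\lambda)$ with the negative binomial pmf $r_{\kappa_*,\lambda}(x)=\frac{\Gamma(x+\kappa_* )}{x!\,\Gamma(\kappa_* )}\left(\frac{1}{\lambda+1}\right)^x\left(\frac{\lambda}{\lambda+1}\right)^{\kappa_*}$ for $\lambda<\infty$ and $r_{\kappa_*,\infty}(x)=\mathbf 1(x=0)$; $f_H$ is the marginal pmf of $X_i$ when $\lambda_i\sim H$. $\mathcal P(A)$ denotes the set of probability measures on $A$. The squared Hellinger distance between pmfs on $\mathbb Z_+$ is $\mathfrak H^2(p,q)=\frac12\sum_{x=0}^\infty(\sqrt{p(x)}-\sqrt{q(x)})^2$.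 $\mathbb E_{H^*}$ denotes expectation under the model with $\lambda_i\overset{iid}{\sim}H^*$. *)

theory Defs
  imports "HOL-Probability.Probability"
begin

text \<open>Mixing distributions live on (0,\<infinity>], represented by the type ennreal
  (with top = \<infinity>) equipped with its Borel sigma-algebra.\<close>

definition prob_on_pos_ext :: "ennreal measure \<Rightarrow> bool" where
  "prob_on_pos_ext H \<longleftrightarrow> prob_space H \<and> sets H = sets borel \<and> emeasure H {0} = 0"

definition negbin :: "real \<Rightarrow> ennreal \<Rightarrow> nat \<Rightarrow> real" where
  "negbin \<kappa> lam x =
     (if lam = \<infinity> then (if x = 0 then 1 else 0)
      else (let l = enn2real lam in
        Gamma (real x + \<kappa>) / (fact x * Gamma \<kappa>) * (1 / (l + 1)) ^ x * (l / (l + 1)) powr \<kappa>))"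

definition fH :: "real \<Rightarrow> ennreal measure \<Rightarrow> nat \<Rightarrow> real" where
  "fH \<kappa> H x = (\<integral>lam. negbin \<kappa> lam x \<partial>H)"

definition eln :: "real \<Rightarrow> ereal" where
  "eln t = (if t > 0 then ereal (ln t) else -\<infinity>)"

definition loglik :: "real \<Rightarrow> ennreal measure \<Rightarrow> nat list \<Rightarrow> ereal" where
  "loglik \<kappa> H xs = (\<Sum>i<length xs. eln (fH \<kappa> H (xs ! i)))"

definition hellinger2 :: "(nat \<Rightarrow> real) \<Rightarrow> (nat \<Rightarrow> real) \<Rightarrow> real" where
  "hellinger2 p q = (1/2) * (\<Sum>x. (sqrt (p x) - sqrt (q x))^2)"

end

theory Submission imports Defs begin

definition nbc :: "real \<Rightarrow> nat \<Rightarrow> real" where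
  "nbc \<kappa> x = Gamma (real x + \<kappa>) / (fact x * Gamma \<kappa>)"

lemma nbc_eq: assumes "\<kappa> > 0" shows "nbc \<kappa> x = pochhammer \<kappa> x / fact x"
proof -
  have "\<kappa> \<notin> \<int>\<^sub>\<le>\<^sub>0" using assms by (auto elim!: nonpos_Ints_cases)
  then have "pochhammer \<kappa> x = Gamma (\<kappa> + real x) / Gamma \<kappa>" by (rule pochhammer_Gamma)
  then show ?thesis using assms by (simp add: nbc_def add.commute)
qed

lemma nbc_pos: assumes "\<kappa> > 0" shows "nbc \<kappa> x > 0"
  using assms by (simp add: nbc_def)

lemma nbc_series: assumes "\<kappa> > 0" "0 \<le> w" "w < 1"
  shows "(\<lambda>x. nbc \<kappa> x * w ^ x) sums ((1 - w) powr (-\<kappa>))"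
proof -
  have "\<bar>-w\<bar> < 1" using assms by simp
  from gen_binomial_real[OF this, of "-\<kappa>"]
  have "(\<lambda>n. ((-\<kappa>) gchoose n) * (-w)^n) sums (1 + - w) powr (-\<kappa>)" .
  moreover have "((-\<kappa>) gchoose n) * (-w)^n = nbc \<kappa> n * w ^ n" for n
  proof -
    have "((-\<kappa>) gchoose n) * (-w)^n = ((-1)^n * (-1)^n) * (pochhammer \<kappa> n / fact n) * w ^ n"
      by (simp add: gbinomial_pochhammer power_minus[of w])
    also have "(-1::real)^n * (-1)^n = 1" by (simp flip: power_add)
    finally show ?thesis using nbc_eq[OF assms(1)] by simp
  qed
  ultimately show ?thesis by simp
qed

lemma negbin_fin: assumes "lam \<noteq> \<infinity>"
  shows "negbin \<kappa> lam x = nbc \<kappa> x * (1 / (enn2real lam + 1)) ^ x * (enn2real lam / (enn2real lam + 1)) powr \<kappa>"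
  using assms by (simp add: negbin_def nbc_def Let_def)

lemma negbin_nonneg: assumes "\<kappa> > 0" shows "negbin \<kappa> lam x \<ge> 0"
proof (cases "lam = \<infinity>")
  case True then show ?thesis by (simp add: negbin_def)
next
  case False then show ?thesis
  proof -
    have "0 \<le> nbc \<kappa> x" using nbc_pos[OF assms, of x] by simp
    moreover have "0 \<le> (1 / (enn2real lam + 1)) ^ x" by simp
    moreover have "0 \<le> (enn2real lam / (enn2real lam + 1)) powr \<kappa>" by simp
    ultimately show ?thesis using False by (simp add: negbin_fin)
  qed
qed

lemma negbin_pgf:
  assumes k: "\<kappa> > 0" and lam: "lam \<noteq> \<infinity>" "lam \<noteq> 0" and z: "0 \<le> z" "z / (enn2real lam + 1) < 1"
  shows "(\<lambda>x. negbin \<kappa> lam x * z ^ x) sums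
     ((enn2real lam / (enn2real lam + 1)) powr \<kappa> * (1 - z / (enn2real lam + 1)) powr (-\<kappa>))"
proof -
  define l where "l = enn2real lam"
  have l: "l > 0" using lam unfolding l_def
    by (simp add: enn2real_positive_iff order_neq_le_trans top.not_eq_extremum)
  have "(\<lambda>x. nbc \<kappa> x * (z / (l+1)) ^ x) sums ((1 - z / (l+1)) powr (-\<kappa>))"
    by (rule nbc_series) (use k z l in \<open>auto simp: l_def\<close>)
  then have "(\<lambda>x. (l / (l + 1)) powr \<kappa> * (nbc \<kappa> x * (z / (l+1)) ^ x)) sums
      ((l / (l + 1)) powr \<kappa> * (1 - z / (l+1)) powr (-\<kappa>))" by (rule sums_mult)
  moreover have "(l / (l + 1)) powr \<kappa> * (nbc \<kappa> x * (z / (l+1)) ^ x) = negbin \<kappa> lam x * z ^ x" for x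
    using lam by (simp add: negbin_fin l_def[symmetric] power_divide field_simps)
  ultimately show ?thesis by (simp add: l_def)
qed

lemma negbin_sums: assumes k: "\<kappa> > 0" and lam: "lam \<noteq> 0"
  shows "negbin \<kappa> lam sums 1"
proof (cases "lam = \<infinity>")
  case True
  have "(\<lambda>x. if x = 0 then 1 else 0) sums (1::real)" using sums_single[of 0 "\<lambda>_. 1::real"] by simp
  moreover have "negbin \<kappa> \<top> = (\<lambda>x. if x = 0 then 1 else 0)" by (simp add: negbin_def fun_eq_iff)
  ultimately show ?thesis using True by simp
next
  case False
  define l where "l = enn2real lam"
  have l: "l > 0" using lam False unfolding l_def
    by (simp add: enn2real_positive_iff order_neq_le_trans top.not_eq_extremum)
  have "(\<lambda>x. negbin \<kappa> lam x * 1 ^ x) sums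
     ((l / (l + 1)) powr \<kappa> * (1 - 1 / (l + 1)) powr (-\<kappa>))"
    unfolding l_def by (rule negbin_pgf) (use k lam False l in \<open>auto simp: l_def\<close>)
  moreover have "1 - 1 / (l + 1) = l / (l+1)" using l by (simp add: field_simps)
  ultimately show ?thesis using l by (simp add: powr_minus divide_pos_pos)
qed

lemma negbin_zero: "negbin \<kappa> 0 x = 0" if "\<kappa> > 0"
  using that by (simp add: negbin_def)

lemma negbin_le1: assumes k: "\<kappa> > 0" shows "negbin \<kappa> lam x \<le> 1"
proof (cases "lam = 0")
  case True then show ?thesis using k by (simp add: negbin_zero)
next
  case False
  have "negbin \<kappa> lam x \<le> (\<Sum>y\<in>{x}. negbin \<kappa> lam y)" by simp
  also have "\<dots> \<le> 1"
    using sum_le_suminf[OF sums_summable[OF negbin_sums[OF k False]], of "{x}"]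
      sums_unique[OF negbin_sums[OF k False]] negbin_nonneg[OF k] by auto
  finally show ?thesis .
qed

lemma negbin_measurable[measurable]: "(\<lambda>lam. negbin \<kappa> lam x) \<in> borel_measurable borel"
  unfolding negbin_def Let_def by measurable

definition q0 :: "real \<Rightarrow> real" where "q0 L = 1 / (L + 1)"
definition rho :: "real \<Rightarrow> real" where "rho L = (1 + q0 L) / 2"
definition C0 :: "real \<Rightarrow> real \<Rightarrow> real" where "C0 \<kappa> L = ((1 - q0 L) / (1 + q0 L)) powr (-\<kappa>)"

lemma q0_props: "L > 0 \<Longrightarrow> 0 < q0 L \<and> q0 L < 1"
  by (simp add: q0_def)

lemma rho_props: "L > 0 \<Longrightarrow> 0 < rho L \<and> rho L < 1"
  using q0_props[of L] by (simp add: rho_def)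

lemma negbin_tail:
  assumes k: "\<kappa> > 0" and L: "L > 0" and lam: "lam \<noteq> \<infinity>" "ennreal L \<le> lam"
  shows "1 - (\<Sum>x\<le>K. negbin \<kappa> lam x) \<le> C0 \<kappa> L * rho L ^ Suc K"
proof -
  define l where "l = enn2real lam"
  have lL: "L \<le> l" using lam L unfolding l_def
    using enn2real_mono[OF lam(2)] lam(1) L by (simp add: top.not_eq_extremum)
  have lam0: "lam \<noteq> 0" proof
    assume "lam = 0" with lam(2) L show False by simp
  qed
  define z where "z = 1 / rho L"
  have q0: "0 < q0 L" "q0 L < 1" using q0_props[OF L] by auto
  have qq: "1 / (l + 1) \<le> q0 L" using lL L by (simp add: q0_def frac_le)
  have z1: "z \<ge> 1" using q0 by (simp add: z_def rho_def)
  have zq: "z / (l+1) \<le> 2 * q0 L / (1 + q0 L)"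
  proof -
    have "z / (l+1) = z * (1 / (l+1))" by simp
    also have "\<dots> \<le> z * q0 L" using qq z1 by (intro mult_left_mono) auto
    also have "\<dots> = 2 * q0 L / (1 + q0 L)" by (simp add: z_def rho_def)
    finally show ?thesis .
  qed
  have zq1: "2 * q0 L / (1 + q0 L) < 1" using q0 by (simp add: field_simps)
  have pgf: "(\<lambda>x. negbin \<kappa> lam x * z ^ x) sums
     ((l / (l + 1)) powr \<kappa> * (1 - z / (l + 1)) powr (-\<kappa>))"
    unfolding l_def by (rule negbin_pgf) (use k lam lam0 z1 zq zq1 in \<open>auto simp: l_def\<close>)
  have s1: "(\<lambda>x. negbin \<kappa> lam x - (if x \<in> {..K} then negbin \<kappa> lam x else 0)) sums
      (1 - (\<Sum>x\<le>K. negbin \<kappa> lam x))"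
    by (intro sums_diff negbin_sums k lam0 sums_If_finite_set) simp
  have s2: "(\<lambda>x. negbin \<kappa> lam x * z ^ x / z ^ Suc K) sums
     ((l / (l + 1)) powr \<kappa> * (1 - z / (l + 1)) powr (-\<kappa>) / z ^ Suc K)"
    by (rule sums_divide[OF pgf])
  have "1 - (\<Sum>x\<le>K. negbin \<kappa> lam x) \<le> (l / (l + 1)) powr \<kappa> * (1 - z / (l + 1)) powr (-\<kappa>) / z ^ Suc K"
  proof (rule sums_le[OF _ s1 s2])
    fix x
    show "negbin \<kappa> lam x - (if x \<in> {..K} then negbin \<kappa> lam x else 0) \<le> negbin \<kappa> lam x * z ^ x / z ^ Suc K"
    proof (cases "x \<le> K")
      case True then show ?thesis using negbin_nonneg[OF k, of lam x] z1 by simp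
    next
      case False
      then have "z ^ Suc K \<le> z ^ x" using z1 by (intro power_increasing) auto
      then have "1 \<le> z ^ x / z ^ Suc K" using z1 by simp
      then have "negbin \<kappa> lam x * 1 \<le> negbin \<kappa> lam x * (z ^ x / z ^ Suc K)"
        using negbin_nonneg[OF k, of lam x] by (intro mult_left_mono) auto
      then show ?thesis using False by simp
    qed
  qed
  also have "\<dots> \<le> 1 * C0 \<kappa> L / z ^ Suc K"
  proof (intro divide_right_mono mult_mono)
    show "(l / (l + 1)) powr \<kappa> \<le> 1" using lL L k by (intro powr_le1) auto
    show "(1 - z / (l + 1)) powr (-\<kappa>) \<le> C0 \<kappa> L"
      unfolding C0_def
    proof (rule powr_mono2')
      show "0 < (1 - q0 L) / (1 + q0 L)" using q0 by simp
      have "(1 - q0 L) / (1 + q0 L) = 1 - 2 * q0 L / (1 + q0 L)" using q0 by (simp add: field_simps)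
      then show "(1 - q0 L) / (1 + q0 L) \<le> 1 - z / (l + 1)" using zq by simp
    qed (use k in auto)
  qed (use z1 in auto)
  also have "\<dots> = C0 \<kappa> L * rho L ^ Suc K" by (simp add: z_def power_one_over)
  finally show ?thesis .
qed

lemma negbin_meas_H: "sets H = sets borel \<Longrightarrow> (\<lambda>lam. negbin \<kappa> lam x) \<in> borel_measurable H"
  by (subst measurable_cong_sets[of H borel]) auto

lemma negbin_integrable:
  assumes "prob_space H" "sets H = sets borel" "\<kappa> > 0"
  shows "integrable H (\<lambda>lam. negbin \<kappa> lam x)"
proof -
  interpret prob_space H by fact
  show ?thesis
    by (rule integrable_const_bound[where B=1])
       (use assms negbin_nonneg negbin_le1 negbin_meas_H in auto)
qed

lemma fH_nn:
  assumes "prob_space H" "sets H = sets borel" "\<kappa> > 0"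
  shows "ennreal (fH \<kappa> H x) = (\<integral>\<^sup>+lam. ennreal (negbin \<kappa> lam x) \<partial>H)"
  unfolding fH_def
  by (rule nn_integral_eq_integral[symmetric]) (use assms negbin_integrable negbin_nonneg in auto)

lemma fH_nonneg: "\<kappa> > 0 \<Longrightarrow> fH \<kappa> H x \<ge> 0"
  unfolding fH_def by (simp add: negbin_nonneg)

lemma fH_sums:
  assumes H: "prob_on_pos_ext H" and k: "\<kappa> > 0"
  shows "fH \<kappa> H sums 1"
proof -
  have P: "prob_space H" and sH: "sets H = sets borel" and H0: "emeasure H {0} = 0"
    using H by (auto simp: prob_on_pos_ext_def)
  interpret prob_space H by fact
  have null: "{0} \<in> null_sets H" using H0 sH by (simp add: null_sets_def)
  have "(\<Sum>x. ennreal (fH \<kappa> H x)) = (\<Sum>x. \<integral>\<^sup>+lam. ennreal (negbin \<kappa> lam x) \<partial>H)"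
    using fH_nn[OF P sH k] by simp
  also have "\<dots> = (\<integral>\<^sup>+lam. (\<Sum>x. ennreal (negbin \<kappa> lam x)) \<partial>H)"
    by (rule nn_integral_suminf[symmetric]) (use negbin_meas_H[OF sH] in auto)
  also have "\<dots> = (\<integral>\<^sup>+lam. 1 \<partial>H)"
  proof (rule nn_integral_cong_AE)
    show "AE lam in H. (\<Sum>x. ennreal (negbin \<kappa> lam x)) = 1"
      using AE_not_in[OF null]
    proof eventually_elim
      case (elim lam)
      then have "lam \<noteq> 0" by simp
      have "(\<Sum>x. ennreal (negbin \<kappa> lam x)) = ennreal 1"
        by (rule suminf_ennreal_eq[OF _ negbin_sums[OF k \<open>lam \<noteq> 0\<close>]]) (rule negbin_nonneg[OF k])
      then show ?case by simp
    qed
  qed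
  also have "\<dots> = 1" by (simp add: emeasure_space_1)
  finally have s1: "(\<Sum>x. ennreal (fH \<kappa> H x)) = ennreal 1" by simp
  have sm: "summable (fH \<kappa> H)"
    by (rule summable_suminf_not_top) (use fH_nonneg[OF k] s1 in auto)
  have e: "(\<Sum>x. ennreal (fH \<kappa> H x)) = ennreal (suminf (fH \<kappa> H))"
    by (rule suminf_ennreal2[OF _ sm]) (rule fH_nonneg[OF k])
  have "ennreal (suminf (fH \<kappa> H)) = ennreal 1" using e s1 by simp
  moreover have "0 \<le> suminf (fH \<kappa> H)" by (rule suminf_nonneg[OF sm]) (rule fH_nonneg[OF k])
  ultimately have "suminf (fH \<kappa> H) = 1" by (subst (asm) ennreal_inj) auto
  then show ?thesis using summable_sums[OF sm] by simp
qed

lemma negbin_pos: assumes k: "\<kappa> > 0" and lam: "lam \<noteq> \<infinity>" "lam \<noteq> 0"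
  shows "negbin \<kappa> lam x > 0"
proof -
  have l: "enn2real lam > 0" using lam
    by (simp add: enn2real_positive_iff order_neq_le_trans top.not_eq_extremum)
  then show ?thesis using lam nbc_pos[OF k, of x] by (simp add: negbin_fin)
qed

locale hstar =
  fixes \<kappa> L :: real and Hs :: "ennreal measure"
  assumes k: "\<kappa> > 0" and L: "L > 0" and P: "prob_space Hs" and sH: "sets Hs = sets borel"
    and supp: "emeasure Hs {lam. ennreal L \<le> lam \<and> lam < \<infinity>} = 1"
begin

interpretation prob_space Hs by (rule P)

lemma A_meas: "{lam::ennreal. ennreal L \<le> lam \<and> lam < \<infinity>} \<in> sets Hs"
  unfolding sH by measurable

lemma AE_supp: "AE lam in Hs. ennreal L \<le> lam \<and> lam < \<infinity>"
proof -
  have "prob {lam. ennreal L \<le> lam \<and> lam < \<infinity>} = 1"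
    using supp A_meas by (simp add: emeasure_eq_measure)
  from AE_prob_1[OF this] show ?thesis by simp
qed

lemma space_Hs: "space Hs = UNIV"
  using sets_eq_imp_space_eq[OF sH] by simp

lemma pos_ext: "prob_on_pos_ext Hs"
proof -
  have "AE lam in Hs. lam \<noteq> 0"
    using AE_supp by eventually_elim (use L in \<open>auto simp: not_le\<close>)
  then have "emeasure Hs {0} = 0"
    using AE_iff_measurable[of "{0}" Hs "\<lambda>x. x \<noteq> 0"] by (auto simp: space_Hs sH)
  then show ?thesis using P sH by (simp add: prob_on_pos_ext_def space_Hs)
qed

lemma fstar_pos: "fH \<kappa> Hs x > 0"
proof (rule ccontr)
  assume "\<not> fH \<kappa> Hs x > 0"
  then have "fH \<kappa> Hs x = 0" using fH_nonneg[OF k, of Hs x] by simp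
  moreover have "(\<integral>\<^sup>+lam. ennreal (negbin \<kappa> lam x) \<partial>Hs) = ennreal (fH \<kappa> Hs x)"
    using fH_nn[OF P sH k, of x] by simp
  ultimately have "(\<integral>\<^sup>+lam. ennreal (negbin \<kappa> lam x) \<partial>Hs) = 0" by simp
  then have "AE lam in Hs. ennreal (negbin \<kappa> lam x) = 0"
    by (subst nn_integral_0_iff_AE[symmetric]) (use negbin_meas_H[OF sH] in auto)
  then have "AE lam in Hs. False"
    using AE_supp
  proof eventually_elim
    case (elim lam)
    then have "lam \<noteq> 0" using L by (auto simp: not_le)
    then have "negbin \<kappa> lam x > 0" using negbin_pos[OF k] elim by auto
    then show ?case using elim by simp
  qed
  then show False by simp
qed

lemma fstar_tail: "1 - (\<Sum>x\<le>K. fH \<kappa> Hs x) \<le> C0 \<kappa> L * rho L ^ Suc K"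
proof -
  have int: "\<And>x. integrable Hs (\<lambda>lam. negbin \<kappa> lam x)" using negbin_integrable[OF P sH k] .
  have "1 - (\<Sum>x\<le>K. fH \<kappa> Hs x) = (\<integral>lam. (1 - (\<Sum>x\<le>K. negbin \<kappa> lam x)) \<partial>Hs)"
    unfolding fH_def using int by (simp add: integral_diff integral_sum prob_space)
  also have "\<dots> \<le> (\<integral>lam. C0 \<kappa> L * rho L ^ Suc K \<partial>Hs)"
  proof (rule integral_mono_AE)
    show "integrable Hs (\<lambda>lam. 1 - (\<Sum>x\<le>K. negbin \<kappa> lam x))"
      by (intro Bochner_Integration.integrable_diff)
        (use Bochner_Integration.integrable_sum[where I="{..K}" and f="\<lambda>i lam. negbin \<kappa> lam i" and M=Hs] int in auto)
    show "integrable Hs (\<lambda>lam. C0 \<kappa> L * rho L ^ Suc K)" by simp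
    show "AE lam in Hs. 1 - (\<Sum>x\<le>K. negbin \<kappa> lam x) \<le> C0 \<kappa> L * rho L ^ Suc K"
      using AE_supp
    proof eventually_elim
      case (elim lam)
      then show ?case by (intro negbin_tail[OF k L]) auto
    qed
  qed
  also have "\<dots> = C0 \<kappa> L * rho L ^ Suc K" by (simp add: prob_space)
  finally show ?thesis .
qed

end

definition mixm :: "real \<Rightarrow> ennreal measure \<Rightarrow> ennreal measure \<Rightarrow> ennreal measure" where
  "mixm t H1 H2 = measure_pmf (bernoulli_pmf t) \<bind> (\<lambda>b. if b then H1 else H2)"

lemma mixm_facts:
  assumes H1: "prob_on_pos_ext H1" and H2: "prob_on_pos_ext H2" and t: "0 \<le> t" "t \<le> 1" and k: "\<kappa> > 0"
  shows "prob_on_pos_ext (mixm t H1 H2)"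
    and "fH \<kappa> (mixm t H1 H2) x = t * fH \<kappa> H1 x + (1 - t) * fH \<kappa> H2 x"
proof -
  let ?M = "measure_pmf (bernoulli_pmf t)"
  let ?N = "\<lambda>b. if b then H1 else H2"
  have P1: "prob_space H1" and s1: "sets H1 = sets borel" and z1: "emeasure H1 {0} = 0"
    using H1 by (auto simp: prob_on_pos_ext_def)
  have P2: "prob_space H2" and s2: "sets H2 = sets borel" and z2: "emeasure H2 {0} = 0"
    using H2 by (auto simp: prob_on_pos_ext_def)
  have Np: "?N \<in> ?M \<rightarrow>\<^sub>M prob_algebra borel"
    using P1 P2 s1 s2 by (auto simp: space_prob_algebra)
  have Ns: "?N \<in> ?M \<rightarrow>\<^sub>M subprob_algebra borel" by (rule measurable_prob_algebraD[OF Np])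
  have A: "?M \<in> space (prob_algebra ?M)" by (simp add: space_prob_algebra measure_pmf.prob_space_axioms)
  have P: "prob_space (mixm t H1 H2)" unfolding mixm_def by (rule prob_space_bind'[OF A Np])
  have S: "sets (mixm t H1 H2) = sets borel" unfolding mixm_def by (rule sets_bind'[OF A Np])
  have "emeasure (mixm t H1 H2) {0} = (\<integral>\<^sup>+b. emeasure (?N b) {0} \<partial>?M)"
    unfolding mixm_def by (rule emeasure_bind) (use Ns in auto)
  also have "\<dots> = (\<integral>\<^sup>+b. 0 \<partial>?M)" by (intro nn_integral_cong) (use z1 z2 in auto)
  finally show "prob_on_pos_ext (mixm t H1 H2)" using P S by (simp add: prob_on_pos_ext_def)
  have "ennreal (fH \<kappa> (mixm t H1 H2) x) = (\<integral>\<^sup>+lam. ennreal (negbin \<kappa> lam x) \<partial>mixm t H1 H2)"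
    by (rule fH_nn[OF P S k])
  also have "\<dots> = (\<integral>\<^sup>+b. (\<integral>\<^sup>+lam. ennreal (negbin \<kappa> lam x) \<partial>?N b) \<partial>?M)"
    unfolding mixm_def by (rule nn_integral_bind[OF _ Ns]) simp
  also have "\<dots> = (\<integral>\<^sup>+b. ennreal (pmf (bernoulli_pmf t) b) * (\<integral>\<^sup>+lam. ennreal (negbin \<kappa> lam x) \<partial>?N b) \<partial>count_space UNIV)"
    by (rule nn_integral_measure_pmf)
  also have "\<dots> = (\<Sum>b\<in>UNIV. ennreal (pmf (bernoulli_pmf t) b) * (\<integral>\<^sup>+lam. ennreal (negbin \<kappa> lam x) \<partial>?N b))"
    by (rule nn_integral_count_space_finite) simp
  also have "\<dots> = ennreal t * ennreal (fH \<kappa> H1 x) + ennreal (1 - t) * ennreal (fH \<kappa> H2 x)"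
    using t by (simp add: UNIV_bool fH_nn[OF P1 s1 k] fH_nn[OF P2 s2 k])
  also have "\<dots> = ennreal (t * fH \<kappa> H1 x + (1 - t) * fH \<kappa> H2 x)"
    using t fH_nonneg[OF k] by (simp add: ennreal_mult ennreal_plus)
  finally show "fH \<kappa> (mixm t H1 H2) x = t * fH \<kappa> H1 x + (1 - t) * fH \<kappa> H2 x"
    using t fH_nonneg[OF k, of "mixm t H1 H2" x] fH_nonneg[OF k, of H1 x] fH_nonneg[OF k, of H2 x]
    by (subst (asm) ennreal_inj) auto
qed

lemma small_t:
  fixes c :: "'a \<Rightarrow> real"
  assumes I: "finite I" and hyp: "\<And>t. 0 < t \<Longrightarrow> t \<le> 1/2 \<Longrightarrow> (\<Sum>i\<in>I. ln (1 + t * c i)) \<le> 0"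
  shows "(\<Sum>i\<in>I. c i) \<le> 0"
proof (rule ccontr)
  define S where "S = (\<Sum>i\<in>I. c i)"
  define Q where "Q = (\<Sum>i\<in>I. (c i)^2)"
  define M where "M = 1 + (\<Sum>i\<in>I. \<bar>c i\<bar>)"
  assume "\<not> (\<Sum>i\<in>I. c i) \<le> 0"
  then have S: "S > 0" by (simp add: S_def)
  have Q: "Q \<ge> 0" unfolding Q_def by (simp add: sum_nonneg)
  have M: "M \<ge> 1" unfolding M_def by (simp add: sum_nonneg)
  have cM: "\<bar>c i\<bar> \<le> M" if "i \<in> I" for i
  proof -
    have "\<bar>c i\<bar> \<le> (\<Sum>i\<in>I. \<bar>c i\<bar>)" using that I by (intro member_le_sum) auto
    then show ?thesis by (simp add: M_def)
  qed
  define t where "t = min (1 / (2 * M)) (S / (4 * Q + 1))"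
  have t0: "t > 0" using S Q M by (simp add: t_def)
  have t1: "t \<le> 1 / (2 * M)" by (simp add: t_def)
  have t2: "t \<le> S / (4 * Q + 1)" by (simp add: t_def)
  have th: "t \<le> 1/2" using t1 M by (smt (verit) frac_le)
  have small: "\<bar>t * c i\<bar> \<le> 1/2" if "i \<in> I" for i
  proof -
    have "\<bar>t * c i\<bar> = t * \<bar>c i\<bar>" using t0 by (simp add: abs_mult)
    also have "\<dots> \<le> (1 / (2 * M)) * M" using cM[OF that] t1 t0 by (intro mult_mono) auto
    also have "\<dots> = 1/2" using M by simp
    finally show ?thesis .
  qed
  have "(\<Sum>i\<in>I. t * c i - 2 * (t * c i)^2) \<le> (\<Sum>i\<in>I. ln (1 + t * c i))"
  proof (rule sum_mono)
    fix i assume "i \<in> I"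
    from abs_ln_one_plus_x_minus_x_bound[OF small[OF this]]
    show "t * c i - 2 * (t * c i)\<^sup>2 \<le> ln (1 + t * c i)" by linarith
  qed
  also have "\<dots> \<le> 0" using hyp t0 th by simp
  finally have "t * S - 2 * t^2 * Q \<le> 0"
    by (simp add: S_def Q_def sum_subtractf sum_distrib_left power_mult_distrib mult.assoc)
  then have "t * (S - 2 * t * Q) \<le> 0" by (simp add: algebra_simps power2_eq_square)
  then have "S \<le> 2 * t * Q" using t0 by (simp add: mult_le_0_iff)
  also have "\<dots> \<le> 2 * (S / (4 * Q + 1)) * Q" using t2 Q by (intro mult_right_mono) auto
  also have "\<dots> < S" using S Q by (simp add: field_simps) (simp add: add_pos_nonneg)
  finally show False by simp
qed

lemma fH_le1: assumes "prob_on_pos_ext H" "\<kappa> > 0" shows "fH \<kappa> H x \<le> 1"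
proof -
  have s: "fH \<kappa> H sums 1" by (rule fH_sums[OF assms])
  have "(\<Sum>y\<in>{x}. fH \<kappa> H y) \<le> suminf (fH \<kappa> H)"
    by (rule sum_le_suminf[OF sums_summable[OF s]]) (use fH_nonneg[OF assms(2)] in auto)
  then show ?thesis using sums_unique[OF s] by simp
qed

lemma loglik_pos: assumes "\<And>i. i < length xs \<Longrightarrow> fH \<kappa> H (xs!i) > 0"
  shows "loglik \<kappa> H xs = ereal (\<Sum>i<length xs. ln (fH \<kappa> H (xs!i)))"
  unfolding loglik_def using assms by (simp add: eln_def)

lemma kkt:
  assumes k: "\<kappa> > 0" and Hh: "prob_on_pos_ext Hh" and Hs: "prob_on_pos_ext Hs"
    and fpos: "\<And>x. fH \<kappa> Hs x > 0"
    and mx: "\<And>H. prob_on_pos_ext H \<Longrightarrow> loglik \<kappa> H xs \<le> loglik \<kappa> Hh xs"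
  shows "\<forall>i<length xs. fH \<kappa> Hh (xs!i) > 0"
    and "(\<Sum>i<length xs. fH \<kappa> Hs (xs!i) / fH \<kappa> Hh (xs!i)) \<le> real (length xs)"
proof -
  let ?n = "length xs"
  let ?g = "\<lambda>i. fH \<kappa> Hh (xs!i)" and ?f = "\<lambda>i. fH \<kappa> Hs (xs!i)"
  have ls: "loglik \<kappa> Hs xs = ereal (\<Sum>i<?n. ln (?f i))" by (rule loglik_pos) (rule fpos)
  show gpos: "\<forall>i<?n. ?g i > 0"
  proof (rule ccontr)
    assume "\<not> (\<forall>i<?n. ?g i > 0)"
    then obtain j where j: "j < ?n" "\<not> ?g j > 0" by auto
    have ej: "eln (?g j) = -\<infinity>" using j by (simp add: eln_def)
    have nt: "(\<Sum>i\<in>{..<?n} - {j}. eln (?g i)) \<noteq> \<infinity>"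
      by (subst sum_Pinfty) (auto simp: eln_def)
    have "loglik \<kappa> Hh xs = eln (?g j) + (\<Sum>i\<in>{..<?n} - {j}. eln (?g i))"
      unfolding loglik_def using j by (subst sum.remove[of _ j]) auto
    also have "\<dots> = -\<infinity>" using ej nt by simp
    finally have "loglik \<kappa> Hs xs \<le> -\<infinity>" using mx[OF Hs] by simp
    then show False using ls by simp
  qed
  have lh: "loglik \<kappa> Hh xs = ereal (\<Sum>i<?n. ln (?g i))" by (rule loglik_pos) (use gpos in auto)
  have "(\<Sum>i<?n. ?f i / ?g i - 1) \<le> 0"
  proof (rule small_t)
    fix t :: real assume t: "0 < t" "t \<le> 1/2"
    let ?H = "mixm t Hs Hh"
    have pe: "prob_on_pos_ext ?H" using mixm_facts(1)[OF Hs Hh _ _ k] t by auto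
    have fm: "fH \<kappa> ?H x = t * fH \<kappa> Hs x + (1 - t) * fH \<kappa> Hh x" for x
      using mixm_facts(2)[OF Hs Hh _ _ k] t by auto
    have mpos: "fH \<kappa> ?H (xs!i) > 0" if "i < ?n" for i
      unfolding fm using t fpos[of "xs!i"] gpos that
      by (intro add_pos_nonneg) (auto intro!: mult_nonneg_nonneg)
    have "loglik \<kappa> ?H xs = ereal (\<Sum>i<?n. ln (fH \<kappa> ?H (xs!i)))" by (rule loglik_pos) (use mpos in auto)
    with mx[OF pe] lh have le: "(\<Sum>i<?n. ln (fH \<kappa> ?H (xs!i))) \<le> (\<Sum>i<?n. ln (?g i))" by simp
    have eq: "ln (1 + t * (?f i / ?g i - 1)) = ln (fH \<kappa> ?H (xs!i)) - ln (?g i)" if "i < ?n" for i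
    proof -
      have gi: "?g i > 0" using gpos that by auto
      have "1 + t * (?f i / ?g i - 1) = fH \<kappa> ?H (xs!i) / ?g i"
        using gi unfolding fm by (simp add: field_simps)
      then show ?thesis using gi mpos[OF that] by (simp add: ln_div)
    qed
    have "(\<Sum>i<?n. ln (1 + t * (?f i / ?g i - 1))) = (\<Sum>i<?n. ln (fH \<kappa> ?H (xs!i))) - (\<Sum>i<?n. ln (?g i))"
      using eq by (simp add: sum_subtractf)
    then show "(\<Sum>i<?n. ln (1 + t * (?f i / ?g i - 1))) \<le> 0" using le by simp
  qed simp
  then show "(\<Sum>i<?n. ?f i / ?g i) \<le> real ?n" by (simp add: sum_subtractf)
qed

lemma group_sum:
  fixes xs :: "nat list" and \<phi> :: "nat \<Rightarrow> real"
  assumes "\<forall>i<length xs. xs!i \<le> K"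
  shows "(\<Sum>i<length xs. \<phi> (xs!i)) = (\<Sum>x\<le>K. real (card {i. i < length xs \<and> xs!i = x}) * \<phi> x)"
proof -
  have "(\<Sum>i<length xs. \<phi> (xs!i)) = (\<Sum>x\<in>{..K}. \<Sum>i\<in>{i\<in>{..<length xs}. xs!i = x}. \<phi> (xs!i))"
    by (rule sum.group[symmetric]) (use assms in auto)
  also have "\<dots> = (\<Sum>x\<le>K. real (card {i. i < length xs \<and> xs!i = x}) * \<phi> x)"
  proof (rule sum.cong[OF refl])
    fix x
    have "(\<Sum>i\<in>{i\<in>{..<length xs}. xs!i = x}. \<phi> (xs!i)) = (\<Sum>i\<in>{i\<in>{..<length xs}. xs!i = x}. \<phi> x)"
      by (rule sum.cong) auto
    also have "\<dots> = real (card {i. i < length xs \<and> xs!i = x}) * \<phi> x"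
      by (simp add: Collect_conj_eq lessThan_def Int_commute)
    finally show "(\<Sum>i\<in>{i\<in>{..<length xs}. xs!i = x}. \<phi> (xs!i)) = real (card {i. i < length xs \<and> xs!i = x}) * \<phi> x" .
  qed
  finally show ?thesis .
qed

lemma cubic_ineq: fixes u :: real assumes "u > 0" shows "u \<ge> 3/2 - 1 / (2 * u^2)"
proof -
  have "2*u^3 - 3*u^2 + 1 = (u-1)^2*(2*u+1)" by (simp add: algebra_simps power2_eq_square power3_eq_cube)
  also have "\<dots> \<ge> 0" using assms by simp
  finally have "2*u^3 - 3*u^2 + 1 \<ge> 0" .
  then show ?thesis using assms by (simp add: field_simps power2_eq_square power3_eq_cube)
qed

lemma amgm_P: fixes f P h :: real assumes "f > 0" shows "(P - f) * (h - 1) \<le> (P - f)^2 / f + f * (h - 1)^2 / 4"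
proof -
  have "(P - f)^2 / f + f * (h - 1)^2 / 4 - (P - f) * (h - 1) = ((P - f) - f * (h - 1) / 2)^2 / f"
    using assms by (simp add: field_simps power2_eq_square)
  also have "\<dots> \<ge> 0" using assms by simp
  finally show ?thesis by simp
qed

lemma hell_det:
  fixes g f :: "nat \<Rightarrow> real" and xs :: "nat list"
  assumes g0: "\<And>x. g x \<ge> 0" and gs: "g sums G" and G1: "G \<le> 1"
    and fpos: "\<And>x. f x > 0" and fs: "f sums 1"
    and n: "length xs > 0" and gpos: "\<forall>i<length xs. g (xs!i) > 0"
    and kk: "(\<Sum>i<length xs. f (xs!i) / g (xs!i)) \<le> real (length xs)"
  shows "hellinger2 g f \<le> real (card {i. i < length xs \<and> K < xs!i})
      + 2 * (\<Sum>x\<le>K. (real (card {i. i < length xs \<and> xs!i = x}) / real (length xs) - f x)^2 / f x)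
      + 2 * (1 - (\<Sum>x\<le>K. f x))"
proof -
  define n where "n = length xs"
  define P where "P x = real (card {i. i < n \<and> xs!i = x}) / real n" for x
  define b where "b x = sqrt (g x * f x)" for x
  define d where "d x = (sqrt (g x) - sqrt (f x))^2" for x
  define h where "h x = sqrt (g x / f x)" for x
  define chi where "chi = (\<Sum>x\<le>K. (P x - f x)^2 / f x)"
  define T where "T = 1 - (\<Sum>x\<le>K. f x)"
  have f0: "f x \<ge> 0" for x using fpos[of x] by simp
  have dform: "d x = g x + f x - 2 * b x" for x
    using g0[of x] f0[of x] by (simp add: d_def b_def power2_diff real_sqrt_mult)
  have b0: "b x \<ge> 0" for x by (simp add: b_def g0 f0)
  have ble: "b x \<le> (g x + f x) / 2" for x
  proof -
    have "0 \<le> d x" by (simp add: d_def)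
    then show ?thesis by (simp add: dform)
  qed
  have sg: "summable g" using gs by (rule sums_summable)
  have sf: "summable f" using fs by (rule sums_summable)
  have sb: "summable b"
    by (rule summable_comparison_test'[where g="\<lambda>x. (g x + f x) / 2"])
       (use b0 ble sg sf in \<open>auto intro!: summable_divide summable_add\<close>)
  define B where "B = suminf b"
  have bsum: "b sums B" using sb by (simp add: B_def summable_sums)
  have dsum: "d sums (G + 1 - 2 * B)"
    unfolding dform by (intro sums_diff sums_add gs fs sums_mult bsum)
  have H: "hellinger2 g f = (G + 1 - 2 * B) / 2"
  proof -
    have "(\<lambda>x. (sqrt (g x) - sqrt (f x))^2) = d" by (simp add: d_def fun_eq_iff)
    then show ?thesis unfolding hellinger2_def using sums_unique[OF dsum] by simp
  qed
  have T0: "T \<ge> 0"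
  proof -
    have "(\<Sum>x\<le>K. f x) \<le> suminf f" by (rule sum_le_suminf[OF sf]) (use f0 in auto)
    then show ?thesis using sums_unique[OF fs] by (simp add: T_def)
  qed
  have chi0: "chi \<ge> 0" unfolding chi_def by (intro sum_nonneg) (simp add: f0)
  have Hle1: "hellinger2 g f \<le> 1"
  proof -
    have "0 \<le> B" unfolding B_def by (rule suminf_nonneg[OF sb b0])
    then show ?thesis using H G1 by simp
  qed
  show ?thesis
  proof (cases "\<exists>i<n. K < xs!i")
    case True
    then obtain i where i: "i < n" "K < xs!i" by auto
    have "{i} \<subseteq> {i. i < n \<and> K < xs!i}" using i by auto
    moreover have "finite {i. i < n \<and> K < xs!i}" by simp
    ultimately have "card {i} \<le> card {i. i < n \<and> K < xs!i}" by (intro card_mono)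
    then have "1 \<le> card {i. i < n \<and> K < xs!i}" by simp
    then show ?thesis using Hle1 chi0 T0 unfolding n_def[symmetric] P_def[symmetric] chi_def[symmetric] T_def[symmetric]
      by simp
  next
    case False
    then have allK: "\<forall>i<n. xs!i \<le> K" by auto
    have npos: "real n > 0" using n by (simp add: n_def)
    have fh: "f x * h x = b x" for x
      using fpos[of x] g0[of x] by (simp add: h_def b_def real_sqrt_divide real_sqrt_mult field_simps)
    have fhd: "f x * (h x - 1)^2 = d x" for x
    proof -
      have "f x * (h x)^2 = g x" using fpos[of x] g0[of x] by (simp add: h_def)
      then show ?thesis using fh[of x] by (simp add: dform power2_diff algebra_simps)
    qed
    have hi: "h (xs!i) \<ge> 3/2 - (f (xs!i) / g (xs!i)) / 2" if "i < n" for i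
    proof -
      have gp: "g (xs!i) > 0" using gpos that by (auto simp: n_def)
      have hp: "h (xs!i) > 0" using gp fpos[of "xs!i"] by (simp add: h_def)
      have "(h (xs!i))^2 = g (xs!i) / f (xs!i)" using gp fpos[of "xs!i"] by (simp add: h_def)
      then have "1 / (2 * (h (xs!i))^2) = (f (xs!i) / g (xs!i)) / 2" by simp
      with cubic_ineq[OF hp] show ?thesis by simp
    qed
    have "(\<Sum>i<n. h (xs!i)) \<ge> (\<Sum>i<n. 3/2 - (f (xs!i) / g (xs!i)) / 2)"
      by (intro sum_mono) (use hi in auto)
    also have "(\<Sum>i<n. 3/2 - (f (xs!i) / g (xs!i)) / 2) = 3/2 * n - (\<Sum>i<n. f (xs!i) / g (xs!i)) / 2"
      by (simp add: sum_subtractf sum_divide_distrib)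
    finally have hsum: "(\<Sum>i<n. h (xs!i)) \<ge> real n" using kk by (simp add: n_def)
    have grp: "(\<Sum>i<n. \<phi> (xs!i)) = real n * (\<Sum>x\<le>K. P x * \<phi> x)" for \<phi>
      using group_sum[of xs K \<phi>] allK npos
      by (simp add: n_def P_def sum_distrib_left)
    have Ph: "(\<Sum>x\<le>K. P x * h x) \<ge> 1" using hsum grp[of h] npos by (simp add: field_simps)
    have P1: "(\<Sum>x\<le>K. P x) = 1" using grp[of "\<lambda>_. 1"] npos by simp
    have bK: "(\<Sum>x\<le>K. b x) \<le> B" unfolding B_def by (rule sum_le_suminf[OF sb]) (use b0 in auto)
    have dK: "(\<Sum>x\<le>K. d x) \<le> 2 * hellinger2 g f"
    proof -
      have "(\<Sum>x\<le>K. d x) \<le> suminf d"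
        by (rule sum_le_suminf[OF sums_summable[OF dsum]]) (auto simp: d_def)
      then show ?thesis using sums_unique[OF dsum] H by simp
    qed
    have "hellinger2 g f \<le> 1 - B" using H G1 by simp
    also have "\<dots> \<le> (\<Sum>x\<le>K. P x * h x) - (\<Sum>x\<le>K. f x * h x)" using Ph bK fh by simp
    also have "\<dots> = (\<Sum>x\<le>K. (P x - f x) * (h x - 1)) + ((\<Sum>x\<le>K. P x) - (\<Sum>x\<le>K. f x))"
      by (simp add: algebra_simps sum_subtractf sum.distrib)
    also have "\<dots> \<le> (\<Sum>x\<le>K. (P x - f x)^2 / f x + d x / 4) + T"
    proof -
      have pw: "(P x - f x) * (h x - 1) \<le> (P x - f x)^2 / f x + d x / 4" for x
        using amgm_P[OF fpos[of x], of "P x" "h x"] by (simp add: fhd)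
      show ?thesis unfolding P1 T_def by (intro add_mono sum_mono pw) simp
    qed
    also have "\<dots> = chi + (\<Sum>x\<le>K. d x) / 4 + T"
      by (simp add: chi_def sum.distrib sum_divide_distrib)
    finally have "hellinger2 g f \<le> chi + (\<Sum>x\<le>K. d x) / 4 + T" .
    then have "hellinger2 g f \<le> 2 * chi + 2 * T" using dK by simp
    then show ?thesis unfolding n_def[symmetric] P_def[symmetric] chi_def[symmetric] T_def[symmetric]
      by simp
  qed
qed

primrec Ln :: "nat pmf \<Rightarrow> nat \<Rightarrow> nat list pmf" where
  "Ln p 0 = return_pmf []"
| "Ln p (Suc n) = bind_pmf p (\<lambda>a. map_pmf (Cons a) (Ln p n))"

lemma pmf_map_Cons: "pmf (map_pmf (Cons a) M) (y # ys) = (if a = y then pmf M ys else 0)"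
proof (cases "a = y")
  case True
  have "inj (Cons a)" by (simp add: inj_def)
  from pmf_map_inj'[OF this] True show ?thesis by simp
next
  case False
  then have "y # ys \<notin> set_pmf (map_pmf (Cons a) M)" by auto
  then show ?thesis using False by (metis pmf_eq_0_set_pmf)
qed

lemma pmf_map_Cons_Nil: "pmf (map_pmf (Cons a) M) [] = 0"
proof -
  have "[] \<notin> set_pmf (map_pmf (Cons a) M)" by auto
  then show ?thesis by (metis pmf_eq_0_set_pmf)
qed

lemma pmf_Ln: "pmf (Ln p n) xs = (if length xs = n then (\<Prod>i<n. pmf p (xs!i)) else 0)"
proof (induction n arbitrary: xs)
  case 0
  then show ?case by (cases xs) auto
next
  case (Suc n)
  show ?case
  proof (cases xs)
    case Nil
    then show ?thesis by (simp add: pmf_bind pmf_map_Cons_Nil)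
  next
    case (Cons y ys)
    have "pmf (Ln p (Suc n)) xs = (\<integral>a. (if a = y then pmf (Ln p n) ys else 0) \<partial>measure_pmf p)"
      unfolding Cons by (simp add: pmf_bind pmf_map_Cons)
    also have "\<dots> = (\<integral>a. pmf (Ln p n) ys * indicator {y} a \<partial>measure_pmf p)"
      by (intro Bochner_Integration.integral_cong) (auto simp: indicator_def)
    also have "\<dots> = pmf (Ln p n) ys * measure p {y}"
    proof -
      have "(\<integral>a. pmf (Ln p n) ys * indicator {y} a \<partial>measure_pmf p) = pmf (Ln p n) ys * (\<integral>a. indicator {y} a \<partial>measure_pmf p)"
        by (rule Bochner_Integration.integral_mult_right_zero)
      also have "(\<integral>a. indicator {y} a \<partial>measure_pmf p) = measure p {y}"
        using Bochner_Integration.integral_indicator[where M="measure_pmf p" and A="{y}"] by simp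
      finally show ?thesis .
    qed
    also have "\<dots> = pmf p y * pmf (Ln p n) ys"
      by (simp add: measure_pmf_single)
    also have "\<dots> = (if length xs = Suc n then (\<Prod>i<Suc n. pmf p (xs!i)) else 0)"
      unfolding Suc Cons by (simp add: prod.lessThan_Suc_shift del: prod.lessThan_Suc)
    finally show ?thesis .
  qed
qed

lemma set_pmf_Ln: "xs \<in> set_pmf (Ln p n) \<Longrightarrow> length xs = n"
  by (simp add: set_pmf_iff pmf_Ln split: if_splits)

definition cntA :: "nat set \<Rightarrow> nat list \<Rightarrow> nat" where
  "cntA A xs = length (filter (\<lambda>y. y \<in> A) xs)"

lemma cntA_Cons: "real (cntA A (a # ys)) = (if a \<in> A then 1 else 0) + real (cntA A ys)"
  by (simp add: cntA_def)

lemma nn_integral_ind_const: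
  assumes "u \<ge> 0" "v \<ge> 0"
  shows "(\<integral>\<^sup>+a. ennreal ((if a \<in> A then 1 else 0) * u + v) \<partial>measure_pmf p) = ennreal (measure p A * u + v)"
proof -
  have "(\<integral>\<^sup>+a. ennreal ((if a \<in> A then 1 else 0) * u + v) \<partial>measure_pmf p)
      = (\<integral>\<^sup>+a. ennreal u * indicator A a + ennreal v \<partial>measure_pmf p)"
    using assms by (intro nn_integral_cong) (auto simp: indicator_def ennreal_plus)
  also have "\<dots> = ennreal u * emeasure p A + ennreal v"
    by (subst nn_integral_add) (auto simp: nn_integral_cmult measure_pmf.emeasure_space_1)
  also have "\<dots> = ennreal (measure p A * u + v)"
    using assms by (simp add: measure_pmf.emeasure_eq_measure ennreal_mult ennreal_plus mult.commute)
  finally show ?thesis .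
qed

lemma moment1: "(\<integral>\<^sup>+xs. ennreal (real (cntA A xs)) \<partial>measure_pmf (Ln p n)) = ennreal (real n * measure p A)"
proof (induction n)
  case 0
  then show ?case by (simp add: cntA_def)
next
  case (Suc n)
  have "(\<integral>\<^sup>+xs. ennreal (real (cntA A xs)) \<partial>measure_pmf (Ln p (Suc n)))
      = (\<integral>\<^sup>+a. \<integral>\<^sup>+ys. ennreal ((if a \<in> A then 1 else 0) + real (cntA A ys)) \<partial>measure_pmf (Ln p n) \<partial>measure_pmf p)"
    by (simp add: cntA_Cons)
  also have "\<dots> = (\<integral>\<^sup>+a. ennreal ((if a \<in> A then 1 else 0) * 1 + real n * measure p A) \<partial>measure_pmf p)"
  proof (rule nn_integral_cong)
    fix a
    have "(\<integral>\<^sup>+ys. ennreal ((if a \<in> A then 1 else 0) + real (cntA A ys)) \<partial>measure_pmf (Ln p n))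
        = (\<integral>\<^sup>+ys. ennreal (if a \<in> A then 1 else 0) + ennreal (real (cntA A ys)) \<partial>measure_pmf (Ln p n))"
      by (intro nn_integral_cong) (simp add: ennreal_plus)
    also have "\<dots> = ennreal (if a \<in> A then 1 else 0) + ennreal (real n * measure p A)"
      by (subst nn_integral_add) (auto simp: Suc measure_pmf.emeasure_space_1)
    also have "\<dots> = ennreal ((if a \<in> A then 1 else 0) * 1 + real n * measure p A)"
      by (simp add: ennreal_plus)
    finally show "(\<integral>\<^sup>+ys. ennreal ((if a \<in> A then 1 else 0) + real (cntA A ys)) \<partial>measure_pmf (Ln p n))
        = ennreal ((if a \<in> A then 1 else 0) * 1 + real n * measure p A)" .
  qed
  also have "\<dots> = ennreal (measure p A * 1 + real n * measure p A)"
    by (rule nn_integral_ind_const) auto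
  finally show ?case by (simp add: algebra_simps)
qed

lemma moment2: "(\<integral>\<^sup>+xs. ennreal ((real (cntA A xs))^2) \<partial>measure_pmf (Ln p n))
   = ennreal (real n * measure p A + real n * (real n - 1) * (measure p A)^2)"
proof (induction n)
  case 0
  then show ?case by (simp add: cntA_def)
next
  case (Suc n)
  define f where "f = measure p A"
  have f0: "f \<ge> 0" by (simp add: f_def)
  have "(\<integral>\<^sup>+xs. ennreal ((real (cntA A xs))^2) \<partial>measure_pmf (Ln p (Suc n)))
      = (\<integral>\<^sup>+a. \<integral>\<^sup>+ys. ennreal (((if a \<in> A then 1 else 0) + real (cntA A ys))^2) \<partial>measure_pmf (Ln p n) \<partial>measure_pmf p)"
    by (simp add: cntA_Cons)
  also have "\<dots> = (\<integral>\<^sup>+a. ennreal ((if a \<in> A then 1 else 0) * (1 + 2 * real n * f) + (real n * f + real n * (real n - 1) * f^2)) \<partial>measure_pmf p)"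
  proof (rule nn_integral_cong)
    fix a
    define \<delta> :: real where "\<delta> = (if a \<in> A then 1 else 0)"
    have d0: "\<delta> \<ge> 0" and dd: "\<delta>^2 = \<delta>" by (auto simp: \<delta>_def)
    have "(\<integral>\<^sup>+ys. ennreal ((\<delta> + real (cntA A ys))^2) \<partial>measure_pmf (Ln p n))
        = (\<integral>\<^sup>+ys. ennreal \<delta> + (ennreal (2 * \<delta>) * ennreal (real (cntA A ys)) + ennreal ((real (cntA A ys))^2)) \<partial>measure_pmf (Ln p n))"
      using d0 dd by (intro nn_integral_cong) (simp add: ennreal_plus ennreal_mult power2_sum del: ennreal_plus_if)
    also have "\<dots> = ennreal \<delta> + (ennreal (2 * \<delta>) * ennreal (real n * f) + ennreal (real n * f + real n * (real n - 1) * f^2))"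
      by (simp add: nn_integral_add nn_integral_cmult moment1 Suc measure_pmf.emeasure_space_1 f_def)
    also have "\<dots> = ennreal (\<delta> * (1 + 2 * real n * f) + (real n * f + real n * (real n - 1) * f^2))"
    proof -
      define X where "X = real n * f + real n * (real n - 1) * f^2"
      have X0: "X \<ge> 0" unfolding X_def
        by (cases n) (auto intro!: add_nonneg_nonneg mult_nonneg_nonneg simp: f0)
      have nf: "real n * f \<ge> 0" using f0 by simp
      have "ennreal \<delta> + (ennreal (2 * \<delta>) * ennreal (real n * f) + ennreal X)
          = ennreal \<delta> + (ennreal (2 * \<delta> * (real n * f)) + ennreal X)"
        using d0 nf by (subst ennreal_mult) auto
      also have "\<dots> = ennreal \<delta> + ennreal (2 * \<delta> * (real n * f) + X)"
        using d0 nf X0 by (subst ennreal_plus) auto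
      also have "\<dots> = ennreal (\<delta> + (2 * \<delta> * (real n * f) + X))"
        using d0 nf X0 by (subst ennreal_plus) auto
      also have "\<delta> + (2 * \<delta> * (real n * f) + X) = \<delta> * (1 + 2 * real n * f) + X"
        by (simp add: algebra_simps)
      finally show ?thesis by (simp add: X_def)
    qed
    finally show "(\<integral>\<^sup>+ys. ennreal (((if a \<in> A then 1 else 0) + real (cntA A ys))^2) \<partial>measure_pmf (Ln p n))
        = ennreal ((if a \<in> A then 1 else 0) * (1 + 2 * real n * f) + (real n * f + real n * (real n - 1) * f^2))"
      by (simp add: \<delta>_def)
  qed
  also have "\<dots> = ennreal (f * (1 + 2 * real n * f) + (real n * f + real n * (real n - 1) * f^2))"
    unfolding f_def
  proof (rule nn_integral_ind_const)
    show "0 \<le> 1 + 2 * real n * measure p A" by simp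
    show "0 \<le> real n * measure p A + real n * (real n - 1) * (measure p A)\<^sup>2"
      by (cases n) (auto intro!: add_nonneg_nonneg mult_nonneg_nonneg)
  qed
  finally show ?case by (simp add: f_def algebra_simps power2_eq_square)
qed

lemma var_bound:
  assumes n: "n > 0"
  shows "(\<integral>\<^sup>+xs. ennreal ((real (cntA {x} xs) / real n - pmf p x)^2) \<partial>measure_pmf (Ln p n))
     \<le> ennreal (pmf p x / real n)"
proof -
  define f where "f = pmf p x"
  have f0: "f \<ge> 0" and f1: "f \<le> 1" by (auto simp: f_def pmf_le_1)
  have mf: "measure p {x} = f" by (simp add: f_def measure_pmf_single)
  have np: "real n > 0" using n by simp
  define A where "A = (\<integral>\<^sup>+xs. ennreal ((real (cntA {x} xs) / real n - f)^2) \<partial>measure_pmf (Ln p n))"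
  have pw: "ennreal ((c / real n - f)^2) + ennreal (2 * f / real n) * ennreal c
      = ennreal (1 / (real n)^2) * ennreal (c^2) + ennreal (f^2)" if c0: "c \<ge> 0" for c
  proof -
    have "(c / real n - f)^2 + 2 * f / real n * c = 1 / (real n)^2 * c^2 + f^2"
      using np by (simp add: field_simps power2_eq_square)
    then have "ennreal ((c / real n - f)^2 + 2 * f / real n * c) = ennreal (1 / (real n)^2 * c^2 + f^2)" by simp
    then have e0: "ennreal ((c / real n - f)^2) + ennreal (2 * f / real n * c) = ennreal (1 / (real n)^2 * c^2) + ennreal (f^2)"
      using c0 f0 np by (subst (asm) ennreal_plus; simp)+
    have e1: "ennreal (2 * f / real n) * ennreal c = ennreal (2 * f / real n * c)"
      using c0 f0 np by (subst ennreal_mult[symmetric]) auto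
    have e2: "ennreal (1 / (real n)^2) * ennreal (c^2) = ennreal (1 / (real n)^2 * c^2)"
      by (subst ennreal_mult[symmetric]) auto
    show ?thesis unfolding e1 e2 by (rule e0)
  qed
  have "A + ennreal (2 * f / real n) * ennreal (real n * f)
      = (\<integral>\<^sup>+xs. ennreal ((real (cntA {x} xs) / real n - f)^2) + ennreal (2 * f / real n) * ennreal (real (cntA {x} xs)) \<partial>measure_pmf (Ln p n))"
    unfolding A_def using moment1[where A="{x}" and p=p and n=n]
    by (simp add: nn_integral_add nn_integral_cmult mf)
  also have "\<dots> = (\<integral>\<^sup>+xs. ennreal (1 / (real n)^2) * ennreal ((real (cntA {x} xs))^2) + ennreal (f^2) \<partial>measure_pmf (Ln p n))"
    by (intro nn_integral_cong pw) simp
  also have "\<dots> = ennreal (1 / (real n)^2) * ennreal (real n * f + real n * (real n - 1) * f^2) + ennreal (f^2)"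
    using moment2[where A="{x}" and p=p and n=n] by (simp add: nn_integral_add nn_integral_cmult mf measure_pmf.emeasure_space_1)
  also have "\<dots> = ennreal ((f / real n - f^2 / real n) + 2 * f^2)"
  proof -
    have X0: "real n * f + real n * (real n - 1) * f^2 \<ge> 0"
      using n f0 by (intro add_nonneg_nonneg mult_nonneg_nonneg) auto
    have "ennreal (1 / (real n)^2) * ennreal (real n * f + real n * (real n - 1) * f^2) + ennreal (f^2)
        = ennreal (1 / (real n)^2 * (real n * f + real n * (real n - 1) * f^2) + f^2)"
      using X0 by (subst ennreal_mult[symmetric]; simp add: ennreal_plus del: ennreal_plus_if)
    also have "1 / (real n)^2 * (real n * f + real n * (real n - 1) * f^2) + f^2 = (f / real n - f^2 / real n) + 2 * f^2"
      using np by (simp add: field_simps power2_eq_square)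
    finally show ?thesis .
  qed
  also have "\<dots> = ennreal (f / real n - f^2 / real n) + ennreal (2 * f^2)"
  proof -
    have "f^2 \<le> f" using f0 f1 by (simp add: power2_eq_square mult_left_le)
    then have "f / real n - f^2 / real n \<ge> 0" using np by (simp add: divide_right_mono)
    then show ?thesis by (simp add: ennreal_plus del: ennreal_plus_if)
  qed
  finally have "A + ennreal (2 * f^2) = ennreal (f / real n - f^2 / real n) + ennreal (2 * f^2)"
    using np f0 by (simp add: ennreal_mult[symmetric] power2_eq_square del: ennreal_plus_if)
  then have "ennreal (2 * f^2) + A = ennreal (2 * f^2) + ennreal (f / real n - f^2 / real n)"
    by (simp only: add.commute)
  then have "A = ennreal (f / real n - f^2 / real n)"
    by (subst (asm) ennreal_add_left_cancel) auto
  also have "\<dots> \<le> ennreal (f / real n)" using f0 by (intro ennreal_leI) simp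
  finally show ?thesis by (simp add: A_def f_def)
qed

lemma hell_nonneg:
  fixes g f :: "nat \<Rightarrow> real"
  assumes "\<And>x. g x \<ge> 0" "\<And>x. f x \<ge> 0" "summable g" "summable f"
  shows "hellinger2 g f \<ge> 0"
proof -
  have le: "(sqrt (g x) - sqrt (f x))^2 \<le> g x + f x" for x
    using assms(1,2)[of x] by (simp add: power2_diff real_sqrt_mult[symmetric])
  have "summable (\<lambda>x. (sqrt (g x) - sqrt (f x))^2)"
    by (rule summable_comparison_test'[where g="\<lambda>x. g x + f x"])
       (use le assms in \<open>auto intro!: summable_add\<close>)
  then show ?thesis unfolding hellinger2_def by (simp add: suminf_nonneg)
qed

lemma cntA_card: "cntA A xs = card {i. i < length xs \<and> xs!i \<in> A}"
  unfolding cntA_def by (rule length_filter_conv_card)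

lemma main_bound:
  fixes \<kappa> L :: real and Hs :: "ennreal measure" and n :: nat and Hhat :: "nat list \<Rightarrow> ennreal measure"
  assumes hs: "hstar \<kappa> L Hs" and n: "n \<ge> 1"
    and hh: "\<forall>xs. length xs = n \<longrightarrow> prob_on_pos_ext (Hhat xs) \<and>
        (\<forall>H. prob_on_pos_ext H \<longrightarrow> loglik \<kappa> H xs \<le> loglik \<kappa> (Hhat xs) xs)"
  shows "(\<integral>\<^sup>+ xs. ennreal ((\<Prod>i<n. fH \<kappa> Hs (xs ! i)) * hellinger2 (fH \<kappa> (Hhat xs)) (fH \<kappa> Hs))
            \<partial>count_space {xs :: nat list. length xs = n})
     \<le> ennreal (real n * (1 - (\<Sum>x\<le>K. fH \<kappa> Hs x)) + 2 * (real K + 1) / real n + 2 * (1 - (\<Sum>x\<le>K. fH \<kappa> Hs x)))"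
proof -
  interpret hstar \<kappa> L Hs by (rule hs)
  define f where "f = fH \<kappa> Hs"
  define T where "T = 1 - (\<Sum>x\<le>K. f x)"
  define hel where "hel xs = hellinger2 (fH \<kappa> (Hhat xs)) f" for xs
  have fpos: "\<And>x. f x > 0" by (simp add: f_def fstar_pos)
  have f0: "\<And>x. f x \<ge> 0" using fpos less_imp_le by blast
  have fs: "f sums 1" unfolding f_def by (rule fH_sums[OF pos_ext k])
  have fint: "(\<integral>\<^sup>+x. ennreal (f x) \<partial>count_space UNIV) = 1"
    by (simp add: nn_integral_count_space_nat suminf_ennreal_eq[OF f0 fs])
  define p where "p = embed_pmf f"
  have pmfp: "pmf p x = f x" for x unfolding p_def by (rule pmf_embed_pmf[OF f0 fint])
  have np: "real n > 0" using n by simp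
  have gfacts: "prob_on_pos_ext (Hhat xs)" if "length xs = n" for xs using hh that by auto
  have hel0: "hel xs \<ge> 0" if "length xs = n" for xs
    unfolding hel_def
    by (rule hell_nonneg) (use fH_nonneg[OF k] f0 sums_summable[OF fH_sums[OF gfacts[OF that] k]] sums_summable[OF fs] in auto)
  define Bd where "Bd xs = real (cntA {K<..} xs) + (\<Sum>x\<le>K. (2 / f x) * (real (cntA {x} xs) / real n - f x)^2) + 2 * T" for xs
  have pwb: "hel xs \<le> Bd xs" if len: "length xs = n" for xs
  proof -
    have Hp: "prob_on_pos_ext (Hhat xs)" by (rule gfacts[OF len])
    have mx: "\<And>H. prob_on_pos_ext H \<Longrightarrow> loglik \<kappa> H xs \<le> loglik \<kappa> (Hhat xs) xs" using hh len by auto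
    note kk = kkt[OF k Hp pos_ext fstar_pos mx]
    have "hel xs \<le> real (card {i. i < length xs \<and> K < xs!i})
      + 2 * (\<Sum>x\<le>K. (real (card {i. i < length xs \<and> xs!i = x}) / real (length xs) - f x)^2 / f x)
      + 2 * (1 - (\<Sum>x\<le>K. f x))"
      unfolding hel_def
    proof (rule hell_det[where G=1])
      show "\<And>x. 0 \<le> fH \<kappa> (Hhat xs) x" by (rule fH_nonneg[OF k])
      show "fH \<kappa> (Hhat xs) sums 1" by (rule fH_sums[OF Hp k])
      show "\<And>x. 0 < f x" by (rule fpos)
      show "f sums 1" by (rule fs)
      show "0 < length xs" using len n by simp
      show "\<forall>i<length xs. 0 < fH \<kappa> (Hhat xs) (xs ! i)" using kk(1) .
      show "(\<Sum>i<length xs. f (xs ! i) / fH \<kappa> (Hhat xs) (xs ! i)) \<le> real (length xs)"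
        using kk(2) by (simp add: f_def)
    qed simp
    also have "\<dots> = Bd xs"
    proof -
      have c1: "real (card {i. i < n \<and> K < xs!i}) = real (cntA {K<..} xs)" by (simp add: cntA_card len)
      have c2: "real (card {i. i < n \<and> xs!i = x}) = real (cntA {x} xs)" for x by (simp add: cntA_card len)
      show ?thesis unfolding Bd_def T_def len c1 c2
        by (simp add: sum_distrib_left)
    qed
    finally show ?thesis .
  qed
  have "(\<integral>\<^sup>+ xs. ennreal ((\<Prod>i<n. f (xs ! i)) * hel xs) \<partial>count_space {xs :: nat list. length xs = n})
      = (\<integral>\<^sup>+ xs. ennreal ((\<Prod>i<n. f (xs ! i)) * hel xs) * indicator {xs. length xs = n} xs \<partial>count_space UNIV)"
    by (rule nn_integral_count_space_indicator) simp
  also have "\<dots> = (\<integral>\<^sup>+ xs. ennreal (pmf (Ln p n) xs) * ennreal (hel xs) \<partial>count_space UNIV)"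
  proof (rule nn_integral_cong)
    fix xs :: "nat list"
    show "ennreal ((\<Prod>i<n. f (xs ! i)) * hel xs) * indicator {xs. length xs = n} xs =
          ennreal (pmf (Ln p n) xs) * ennreal (hel xs)"
    proof (cases "length xs = n")
      case True
      then show ?thesis using hel0[OF True] f0
        by (simp add: pmf_Ln pmfp ennreal_mult prod_nonneg)
    next
      case False
      then show ?thesis by (simp add: pmf_Ln)
    qed
  qed
  also have "\<dots> = (\<integral>\<^sup>+ xs. ennreal (hel xs) \<partial>measure_pmf (Ln p n))"
    by (rule nn_integral_measure_pmf[symmetric])
  also have "\<dots> \<le> (\<integral>\<^sup>+ xs. ennreal (Bd xs) \<partial>measure_pmf (Ln p n))"
  proof (rule nn_integral_mono_AE)
    show "AE xs in measure_pmf (Ln p n). ennreal (hel xs) \<le> ennreal (Bd xs)"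
      by (rule AE_pmfI) (use pwb set_pmf_Ln in \<open>auto intro!: ennreal_leI\<close>)
  qed
  also have "\<dots> = (\<integral>\<^sup>+ xs. ennreal (real (cntA {K<..} xs))
        + (\<Sum>x\<le>K. ennreal (2 / f x) * ennreal ((real (cntA {x} xs) / real n - f x)^2)) + ennreal (2 * T) \<partial>measure_pmf (Ln p n))"
  proof (rule nn_integral_cong)
    fix xs
    have T0: "T \<ge> 0"
    proof -
      have "(\<Sum>x\<le>K. f x) \<le> suminf f" by (rule sum_le_suminf[OF sums_summable[OF fs]]) (use f0 in auto)
      then show ?thesis using sums_unique[OF fs] by (simp add: T_def)
    qed
    have s0: "(\<Sum>x\<le>K. (2 / f x) * (real (cntA {x} xs) / real n - f x)^2) \<ge> 0"
      by (intro sum_nonneg mult_nonneg_nonneg) (use f0 in auto)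
    have "ennreal (Bd xs) = ennreal (real (cntA {K<..} xs)) + ennreal (\<Sum>x\<le>K. (2 / f x) * (real (cntA {x} xs) / real n - f x)^2) + ennreal (2 * T)"
      unfolding Bd_def using T0 s0 by (simp add: ennreal_plus del: ennreal_plus_if)
    also have "ennreal (\<Sum>x\<le>K. (2 / f x) * (real (cntA {x} xs) / real n - f x)^2)
        = (\<Sum>x\<le>K. ennreal (2 / f x) * ennreal ((real (cntA {x} xs) / real n - f x)^2))"
    proof -
      have "(\<Sum>x\<le>K. ennreal (2 / f x) * ennreal ((real (cntA {x} xs) / real n - f x)^2))
          = (\<Sum>x\<le>K. ennreal ((2 / f x) * (real (cntA {x} xs) / real n - f x)^2))"
        by (intro sum.cong refl, subst ennreal_mult[symmetric]) (use f0 in auto)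
      also have "\<dots> = ennreal (\<Sum>x\<le>K. (2 / f x) * (real (cntA {x} xs) / real n - f x)^2)"
        by (rule sum_ennreal) (use f0 in auto)
      finally show ?thesis by (rule sym)
    qed
    finally show "ennreal (Bd xs) = ennreal (real (cntA {K<..} xs))
        + (\<Sum>x\<le>K. ennreal (2 / f x) * ennreal ((real (cntA {x} xs) / real n - f x)^2)) + ennreal (2 * T)" .
  qed
  also have "\<dots> = ennreal (real n * measure p {K<..})
      + (\<Sum>x\<le>K. ennreal (2 / f x) * (\<integral>\<^sup>+ xs. ennreal ((real (cntA {x} xs) / real n - f x)^2) \<partial>measure_pmf (Ln p n)))
      + ennreal (2 * T)"
    by (simp add: nn_integral_add nn_integral_sum nn_integral_cmult moment1 measure_pmf.emeasure_space_1)
  also have "\<dots> \<le> ennreal (real n * T) + (\<Sum>x\<le>K. ennreal (2 / f x) * ennreal (f x / real n)) + ennreal (2 * T)"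
  proof (intro add_mono sum_mono mult_left_mono order_refl)
    show "ennreal (real n * measure p {K<..}) \<le> ennreal (real n * T)"
    proof -
      have "measure p {K<..} = 1 - measure p {..K}"
        using measure_pmf.prob_compl[of "{..K}" p] by (simp add: Compl_eq_Diff_UNIV[symmetric] Compl_atMost)
      also have "measure p {..K} = (\<Sum>x\<le>K. f x)" by (simp add: measure_measure_pmf_finite pmfp)
      finally show ?thesis by (simp add: T_def)
    qed
    fix x
    show "(\<integral>\<^sup>+ xs. ennreal ((real (cntA {x} xs) / real n - f x)^2) \<partial>measure_pmf (Ln p n)) \<le> ennreal (f x / real n)"
      using var_bound[of n p x] n by (simp add: pmfp)
  qed simp
  also have "\<dots> = ennreal (real n * T + 2 * (real K + 1) / real n + 2 * T)"
  proof -
    have "ennreal (2 / f x) * ennreal (f x / real n) = ennreal (2 / real n)" for x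
      using fpos[of x] np by (subst ennreal_mult[symmetric]) auto
    then have "(\<Sum>x\<le>K. ennreal (2 / f x) * ennreal (f x / real n)) = (\<Sum>x\<le>K. ennreal (2 / real n))"
      by simp
    also have "\<dots> = ennreal (\<Sum>x\<le>K. 2 / real n)" by (rule sum_ennreal) simp
    also have "(\<Sum>x\<le>K. 2 / real n) = 2 * (real K + 1) / real n" by (simp add: field_simps)
    finally have "(\<Sum>x\<le>K. ennreal (2 / f x) * ennreal (f x / real n)) = ennreal (2 * (real K + 1) / real n)" .
    moreover have "T \<ge> 0"
    proof -
      have "(\<Sum>x\<le>K. f x) \<le> suminf f" by (rule sum_le_suminf[OF sums_summable[OF fs]]) (use f0 in auto)
      then show ?thesis using sums_unique[OF fs] by (simp add: T_def)
    qed
    ultimately show ?thesis using np by (simp add: ennreal_plus del: ennreal_plus_if)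
  qed
  finally show ?thesis by (simp add: f_def T_def hel_def)
qed

theorem theorem3p1:
  fixes \<kappa> L :: real
  assumes "\<kappa> > 0" and "L > 0"
  shows "\<exists>C>0. \<forall>Hstar n (Hhat :: nat list \<Rightarrow> ennreal measure).
     prob_space Hstar \<and> sets Hstar = sets borel \<and>
     emeasure Hstar {lam. ennreal L \<le> lam \<and> lam < \<infinity>} = 1 \<and>
     n \<ge> 2 \<and>
     (\<forall>xs. length xs = n \<longrightarrow> prob_on_pos_ext (Hhat xs) \<and>
        (\<forall>H. prob_on_pos_ext H \<longrightarrow> loglik \<kappa> H xs \<le> loglik \<kappa> (Hhat xs) xs))
     \<longrightarrow>
     (\<integral>\<^sup>+ xs. ennreal ((\<Prod>i<n. fH \<kappa> Hstar (xs ! i)) *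
                         hellinger2 (fH \<kappa> (Hhat xs)) (fH \<kappa> Hstar))
        \<partial>count_space {xs :: nat list. length xs = n})
     \<le> ennreal (C * ln (real n) / real n)"
proof -
  have k: "\<kappa> > 0" and L: "L > 0" using assms by auto
  define r where "r = - ln (rho L)"
  have rho: "0 < rho L" "rho L < 1" using rho_props[OF L] by auto
  have r: "r > 0" using rho by (simp add: r_def)
  define a where "a = C0 \<kappa> L"
  have a: "a > 0" using q0_props[OF L] by (simp add: a_def C0_def)
  define C where "C = (3 * a + 4) / ln 2 + 4 / r"
  have Cpos: "C > 0" using a r by (simp add: C_def add_pos_pos)
  show ?thesis
  proof (intro exI[of _ C] conjI allI impI Cpos)
    fix Hs :: "ennreal measure" and n :: nat and Hhat :: "nat list \<Rightarrow> ennreal measure"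
    assume asm: "prob_space Hs \<and> sets Hs = sets borel \<and>
     emeasure Hs {lam. ennreal L \<le> lam \<and> lam < \<infinity>} = 1 \<and>
     n \<ge> 2 \<and>
     (\<forall>xs. length xs = n \<longrightarrow> prob_on_pos_ext (Hhat xs) \<and>
        (\<forall>H. prob_on_pos_ext H \<longrightarrow> loglik \<kappa> H xs \<le> loglik \<kappa> (Hhat xs) xs))"
    have hs: "hstar \<kappa> L Hs" by (rule hstar.intro) (use asm k L in blast)+
    have n2: "n \<ge> 2" using asm by auto
    have np: "real n \<ge> 2" using n2 by simp
    have hh: "\<forall>xs. length xs = n \<longrightarrow> prob_on_pos_ext (Hhat xs) \<and>
        (\<forall>H. prob_on_pos_ext H \<longrightarrow> loglik \<kappa> H xs \<le> loglik \<kappa> (Hhat xs) xs)" using asm by auto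
    define K where "K = nat \<lceil>2 * ln (real n) / r\<rceil>"
    define T where "T = 1 - (\<Sum>x\<le>K. fH \<kappa> Hs x)"
    have lnn: "ln (real n) \<ge> ln 2" using np by simp
    have ln2: "ln (2::real) > 0" by simp
    have Kge: "real K \<ge> 2 * ln (real n) / r" unfolding K_def by (rule real_nat_ceiling_ge)
    have Kle: "real K \<le> 2 * ln (real n) / r + 1"
    proof -
      have "ln (real n) \<ge> 0" using lnn ln2 by linarith
      then have "0 \<le> 2 * ln (real n) / r" using r by simp
      then show ?thesis unfolding K_def by (simp add: of_nat_nat)
    qed
    have Tle: "T \<le> a * rho L ^ Suc K" unfolding T_def a_def by (rule hstar.fstar_tail[OF hs])
    have T0: "T \<ge> 0"
    proof -
      have fs: "fH \<kappa> Hs sums 1" by (rule fH_sums[OF hstar.pos_ext[OF hs] k])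
      have "(\<Sum>x\<le>K. fH \<kappa> Hs x) \<le> suminf (fH \<kappa> Hs)"
        by (rule sum_le_suminf[OF sums_summable[OF fs]]) (use fH_nonneg[OF k] in auto)
      then show ?thesis using sums_unique[OF fs] by (simp add: T_def)
    qed
    have rhoK: "rho L ^ Suc K \<le> 1 / (real n)^2"
    proof -
      have "ln (rho L ^ Suc K) = real (Suc K) * ln (rho L)" by (rule ln_realpow)
      also have "\<dots> = - (real (Suc K) * r)" by (simp add: r_def)
      also have "\<dots> \<le> - (2 * ln (real n))"
      proof -
        have "2 * ln (real n) \<le> real K * r" using Kge r by (simp add: field_simps)
        also have "\<dots> \<le> real (Suc K) * r" using r by simp
        finally show ?thesis by simp
      qed
      also have "\<dots> = ln (1 / (real n)^2)" using np by (simp add: ln_div ln_realpow)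
      finally show ?thesis using rho np by (subst (asm) ln_le_cancel_iff) auto
    qed
    have n1: "n \<ge> 1" using n2 by simp
    note bnd = main_bound[OF hs n1 hh, of K]
    have "real n * T + 2 * (real K + 1) / real n + 2 * T \<le> C * ln (real n) / real n"
    proof -
      have T1: "T \<le> a / (real n)^2"
      proof -
        have "T \<le> a * rho L ^ Suc K" by (rule Tle)
        also have "\<dots> \<le> a * (1 / (real n)^2)" using rhoK a by (intro mult_left_mono) auto
        finally show ?thesis by simp
      qed
      have "real n * T \<le> a / real n"
      proof -
        have "real n * T \<le> real n * (a / (real n)^2)" using T1 np by (intro mult_left_mono) auto
        then show ?thesis using np by (simp add: power2_eq_square)
      qed
      moreover have "2 * T \<le> a / real n"
      proof -
        have "2 * T \<le> real n * T" using T0 np by (intro mult_right_mono) auto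
        then show ?thesis using \<open>real n * T \<le> a / real n\<close> by simp
      qed
      moreover have "2 * (real K + 1) / real n \<le> (4 * ln (real n) / r + 4) / real n"
      proof (rule divide_right_mono)
        have "2 * (2 * ln (real n) / r) = 4 * ln (real n) / r" by simp
        have "2 * real K \<le> 2 * (2 * ln (real n) / r + 1)" by (rule mult_left_mono[OF Kle]) simp
        then show "2 * (real K + 1) \<le> 4 * ln (real n) / r + 4" by simp
      qed (use np in auto)
      ultimately have "real n * T + 2 * (real K + 1) / real n + 2 * T \<le> (2 * a + 4 + 4 * ln (real n) / r) / real n"
        using np by (simp add: add_divide_distrib)
      also have "\<dots> \<le> C * ln (real n) / real n"
      proof (rule divide_right_mono)
        have "2 * a + 4 \<le> (3 * a + 4) * (ln (real n) / ln 2)"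
        proof -
          have "1 \<le> ln (real n) / ln 2" using lnn ln2 by simp
          then have "(3 * a + 4) * 1 \<le> (3 * a + 4) * (ln (real n) / ln 2)" using a by (intro mult_left_mono) auto
          then show ?thesis using a by simp
        qed
        moreover have "C * ln (real n) = (3 * a + 4) * (ln (real n) / ln 2) + 4 * ln (real n) / r"
          using ln2 r by (simp add: C_def field_simps)
        ultimately show "2 * a + 4 + 4 * ln (real n) / r \<le> C * ln (real n)" by linarith
      qed (use np in auto)
      finally show ?thesis .
    qed
    then have "ennreal (real n * T + 2 * (real K + 1) / real n + 2 * T) \<le> ennreal (C * ln (real n) / real n)"
      by (rule ennreal_leI)
    with bnd n2 show "(\<integral>\<^sup>+ xs. ennreal ((\<Prod>i<n. fH \<kappa> Hs (xs ! i)) *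
                         hellinger2 (fH \<kappa> (Hhat xs)) (fH \<kappa> Hs))
        \<partial>count_space {xs :: nat list. length xs = n})
     \<le> ennreal (C * ln (real n) / real n)" by (simp add: T_def)
  qed
qed

end
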